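(* Let $p>0$, real numbers $A<B$, and $n\in\mathbb{N}$. Let $\Omega_{[A,B]}=\{x\in\mathbb{R}^n:\ A\le x_1\le x_2\le\dots\le x_n\le B\}$ and for $b\in\mathbb{R}$ let $q_b(x)=\sum_{i=1}^n\mathrm{ReLU}(x_i-b)$. Then for all $x,y\in\Omega_{[A,B]}$, $$\mathbb{E}_{b\sim U[A,B]}\,|q_b(x)-q_b(y)|^p\ \ge\ \frac{1}{8n(B-A)4^p}\,\|x-y\|_\infty^{p+1}.$$
   Context: $U[A,B]$ denotes the uniform distribution on the interval $[A,B]$. *)

theory Defs
  imports "HOL-Probability.Probability"
begin

definition ReLU :: "real \<Rightarrow> real" where
  "ReLU t = max t 0"

text \<open>Vectors in R^n are represented as functions nat => real, using indices 1..n.\<close>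

definition qb :: "nat \<Rightarrow> real \<Rightarrow> (nat \<Rightarrow> real) \<Rightarrow> real" where
  "qb n b x = (\<Sum>i=1..n. ReLU (x i - b))"

definition Omega :: "nat \<Rightarrow> real \<Rightarrow> real \<Rightarrow> (nat \<Rightarrow> real) set" where
  "Omega n A B = {x. A \<le> x 1 \<and> (\<forall>i. 1 \<le> i \<and> i < n \<longrightarrow> x i \<le> x (i+1)) \<and> x n \<le> B}"

definition linf_norm :: "nat \<Rightarrow> (nat \<Rightarrow> real) \<Rightarrow> real" where
  "linf_norm n z = Max ((\<lambda>i. \<bar>z i\<bar>) ` {1..n})"

end

theory Submission imports Defs begin

lemma int_lb:
  fixes F :: "real \<Rightarrow> real"
  assumes AB: "A < B" and uv: "A \<le> u" "u \<le> v" "v \<le> B"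
    and c: "\<And>b. b \<in> {u..v} \<Longrightarrow> c \<le> F b" and nn: "\<And>b. 0 \<le> F b"
    and bd: "\<And>b. F b \<le> K" and meas: "F \<in> borel_measurable borel" and c0: "c \<ge> 0"
  shows "(\<integral>b. F b \<partial>(uniform_measure lborel {A..B})) \<ge> c * (v - u) / (B - A)"
proof -
  let ?M = "uniform_measure lborel {A..B}"
  have ps: "prob_space ?M"
    by (rule prob_space_uniform_measure) (use AB in auto)
  then interpret prob_space ?M .
  have mF: "F \<in> borel_measurable ?M" using meas by (simp add: measurable_def)
  have iF: "integrable ?M F"
    by (rule integrable_const_bound[where B=K]) (use nn bd mF in auto)
  have ii: "integrable ?M (\<lambda>b. c * indicator {u..v} b)"
    by (intro integrable_mult_right) (auto intro!: integrable_const_bound[where B=1] split: split_indicator)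
  have "(\<integral>b. c * indicator {u..v} b \<partial>?M) = c * measure ?M {u..v}"
    by simp
  also have "measure ?M {u..v} = measure lborel ({A..B} \<inter> {u..v}) / measure lborel {A..B}"
    using AB by (subst measure_uniform_measure) auto
  also have "{A..B} \<inter> {u..v} = {u..v}" using uv by auto
  also have "measure lborel {u..v} / measure lborel {A..B} = (v - u) / (B - A)" using uv AB by simp
  finally have eq: "(\<integral>b. c * indicator {u..v} b \<partial>?M) = c * (v - u) / (B - A)" by simp
  have "(\<integral>b. c * indicator {u..v} b \<partial>?M) \<le> (\<integral>b. F b \<partial>?M)"
    by (rule integral_mono[OF ii iF]) (use c nn in \<open>auto split: split_indicator\<close>)
  with eq show ?thesis by simp
qed

lemma sortedO:
  assumes "x \<in> Omega n A B" "1 \<le> i" "i \<le> j" "j \<le> n"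
  shows "x i \<le> x j"
  using assms(3,4)
proof (induction j rule: dec_induct)
  case base then show ?case by simp
next
  case (step m)
  have "x m \<le> x (m+1)" using assms(1,2) step by (auto simp: Omega_def)
  then show ?case using step by simp
qed

lemma boundsO:
  assumes "x \<in> Omega n A B" "1 \<le> k" "k \<le> n"
  shows "A \<le> x k" "x k \<le> B"
proof -
  have "x 1 \<le> x k" "x k \<le> x n" using sortedO[OF assms(1)] assms by auto
  then show "A \<le> x k" "x k \<le> B" using assms(1) by (auto simp: Omega_def)
qed

lemma key_mono:
  assumes x: "x \<in> Omega n A B" and y: "y \<in> Omega n A B" and k: "1 \<le> k" "k \<le> n"
    and ab: "y k \<le> a" "a \<le> b" "b \<le> x k"
  shows "(qb n a x - qb n a y) - (qb n b x - qb n b y) \<ge> b - a"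
proof -
  define h where "h i = (ReLU (x i - a) - ReLU (x i - b)) - (ReLU (y i - a) - ReLU (y i - b))" for i
  have eq: "(qb n a x - qb n a y) - (qb n b x - qb n b y) = (\<Sum>i=1..n. h i)"
    by (simp add: qb_def h_def sum_subtractf)
  have hk: "h k = b - a" using ab by (simp add: h_def ReLU_def)
  have hnn: "0 \<le> h i" if "i \<in> {1..n}" for i
  proof (cases "k \<le> i")
    case True
    have "x k \<le> x i" using sortedO[OF x] True k that by auto
    then show ?thesis using ab by (simp add: h_def ReLU_def max_def)
  next
    case False
    have "y i \<le> y k" using sortedO[OF y] False k that by auto
    then show ?thesis using ab by (simp add: h_def ReLU_def max_def)
  qed
  have "h k \<le> (\<Sum>i=1..n. h i)"
    by (rule member_le_sum) (use k hnn in auto)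
  with eq hk show ?thesis by simp
qed

lemma qb_lip: "\<bar>qb n b x - qb n b y\<bar> \<le> (\<Sum>i=1..n. \<bar>x i - y i\<bar>)"
proof -
  have "\<bar>qb n b x - qb n b y\<bar> = \<bar>\<Sum>i=1..n. ReLU (x i - b) - ReLU (y i - b)\<bar>"
    by (simp add: qb_def sum_subtractf)
  also have "\<dots> \<le> (\<Sum>i=1..n. \<bar>ReLU (x i - b) - ReLU (y i - b)\<bar>)" by (rule sum_abs)
  also have "\<dots> \<le> (\<Sum>i=1..n. \<bar>x i - y i\<bar>)"
    by (rule sum_mono) (auto simp: ReLU_def max_def)
  finally show ?thesis .
qed

lemma meas_F: "(\<lambda>b. \<bar>qb n b x - qb n b y\<bar> powr p) \<in> borel_measurable borel"
  unfolding qb_def ReLU_def by measurable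

lemma half:
  assumes x: "x \<in> Omega n A B" and y: "y \<in> Omega n A B" and k: "1 \<le> k" "k \<le> n"
    and le: "y k \<le> x k" and AB: "A < B" and p: "p > 0"
  shows "(\<integral>b. \<bar>qb n b x - qb n b y\<bar> powr p \<partial>(uniform_measure lborel {A..B}))
           \<ge> ((x k - y k)/4) powr p * ((x k - y k)/4) / (B - A)"
proof -
  define d where "d = x k - y k"
  define m where "m = (x k + y k)/2"
  define f where "f b = qb n b x - qb n b y" for b
  have d0: "d \<ge> 0" using le d_def by simp
  have "\<exists>u v. A \<le> u \<and> u \<le> v \<and> v \<le> B \<and> v - u = d/4 \<and> (\<forall>b\<in>{u..v}. d/4 \<le> \<bar>f b\<bar>)"
  proof (cases "f m \<le> 0")
    case True
    have "d/4 \<le> \<bar>f b\<bar>" if "b \<in> {m + d/4 .. x k}" for b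
    proof -
      have bb: "m + d/4 \<le> b" "b \<le> x k" using that by auto
      have "y k \<le> m" "m \<le> b" "b \<le> x k" using bb le d0 by (auto simp: m_def field_simps)
      then have "f m - f b \<ge> b - m" unfolding f_def by (rule key_mono[OF x y k])
      then show ?thesis using True that by auto
    qed
    moreover have "A \<le> m + d/4" "m + d/4 \<le> x k" "x k \<le> B" "x k - (m + d/4) = d/4"
      using boundsO[OF x k] boundsO[OF y k] le by (auto simp: d_def m_def field_simps)
    ultimately show ?thesis by blast
  next
    case False
    have "d/4 \<le> \<bar>f b\<bar>" if "b \<in> {y k .. m - d/4}" for b
    proof -
      have bb: "y k \<le> b" "b \<le> m - d/4" using that by auto
      have "y k \<le> b" "b \<le> m" "m \<le> x k" using bb le d0 by (auto simp: m_def field_simps)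
      then have "f b - f m \<ge> m - b" unfolding f_def by (rule key_mono[OF x y k])
      then show ?thesis using False that by auto
    qed
    moreover have "A \<le> y k" "y k \<le> m - d/4" "m - d/4 \<le> B" "(m - d/4) - y k = d/4"
      using boundsO[OF x k] boundsO[OF y k] le by (auto simp: d_def m_def field_simps)
    ultimately show ?thesis by blast
  qed
  then obtain u v where uv: "A \<le> u" "u \<le> v" "v \<le> B" "v - u = d/4"
     and fb: "\<And>b. b\<in>{u..v} \<Longrightarrow> d/4 \<le> \<bar>f b\<bar>" by blast
  have "(\<integral>b. \<bar>qb n b x - qb n b y\<bar> powr p \<partial>(uniform_measure lborel {A..B})) \<ge> (d/4) powr p * (v - u) / (B - A)"
  proof (rule int_lb[OF AB uv(1-3), where K = "(\<Sum>i=1..n. \<bar>x i - y i\<bar>) powr p"])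
    fix b assume "b \<in> {u..v}"
    then show "(d/4) powr p \<le> \<bar>qb n b x - qb n b y\<bar> powr p"
      using fb d0 p by (auto simp: f_def intro!: powr_mono2)
  next
    fix b show "\<bar>qb n b x - qb n b y\<bar> powr p \<le> (\<Sum>i=1..n. \<bar>x i - y i\<bar>) powr p"
      using qb_lip p by (auto intro!: powr_mono2)
  qed (auto simp: meas_F)
  then show ?thesis using uv d_def by simp
qed

lemma arith_fin:
  fixes e p A B :: real and n :: nat
  assumes e: "e \<ge> 0" and n: "n \<ge> 1" and AB: "A < B" and p: "p > 0"
  shows "1 / (8 * real n * (B - A) * 4 powr p) * e powr (p + 1) \<le> (e/4) powr p * (e/4) / (B - A)"
proof -
  have ep: "e powr (p+1) = e powr p * e"
    using e by (cases "e = 0") (auto simp: powr_add)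
  have d4: "(e/4) powr p = e powr p / 4 powr p" using e by (simp add: powr_divide)
  define X where "X = e powr p * e"
  have X0: "X \<ge> 0" using e by (simp add: X_def)
  have l: "(e/4) powr p * (e/4) / (B - A) = X / (4 * 4 powr p * (B - A))"
    by (simp add: d4 X_def field_simps)
  have r: "1 / (8 * real n * (B - A) * 4 powr p) * e powr (p + 1) = X / (8 * real n * 4 powr p * (B - A))"
    by (simp add: ep X_def)
  have nb: "1 * (B - A) \<le> real n * (B - A)" using n AB by (intro mult_right_mono) auto
  have "X / (8 * real n * 4 powr p * (B - A)) \<le> X / (4 * 4 powr p * (B - A))"
  proof (rule divide_left_mono[OF _ X0])
    have "4 * (4 powr p * (B - A)) \<le> 8 * real n * (4 powr p * (B - A))"
      using n AB by (intro mult_right_mono) auto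
    then show "4 * 4 powr p * (B - A) \<le> 8 * real n * 4 powr p * (B - A)" by (simp add: mult.assoc)
    show "0 < 8 * real n * 4 powr p * (B - A) * (4 * 4 powr p * (B - A))"
      using n AB by (intro mult_pos_pos) auto
  qed
  then show ?thesis using l r by simp
qed

theorem mainTheorem8:
  fixes p A B :: real and n :: nat and x y :: "nat \<Rightarrow> real"
  assumes "p > 0" and "A < B" and "n \<ge> 1"
    and "x \<in> Omega n A B" and "y \<in> Omega n A B"
  shows "(\<integral>b. \<bar>qb n b x - qb n b y\<bar> powr p \<partial>(uniform_measure lborel {A..B}))
           \<ge> 1 / (8 * real n * (B - A) * 4 powr p) * linf_norm n (\<lambda>i. x i - y i) powr (p + 1)"
proof -
  have "linf_norm n (\<lambda>i. x i - y i) \<in> (\<lambda>i. \<bar>x i - y i\<bar>) ` {1..n}"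
    unfolding linf_norm_def using assms(3) by (intro Max_in) auto
  then obtain k where k: "1 \<le> k" "k \<le> n" and L: "linf_norm n (\<lambda>i. x i - y i) = \<bar>x k - y k\<bar>"
    by auto
  define I where "I = (\<integral>b. \<bar>qb n b x - qb n b y\<bar> powr p \<partial>(uniform_measure lborel {A..B}))"
  have "I \<ge> (\<bar>x k - y k\<bar>/4) powr p * (\<bar>x k - y k\<bar>/4) / (B - A)"
  proof (cases "y k \<le> x k")
    case True
    then show ?thesis using half[OF assms(4,5) k True assms(2,1)] by (simp add: I_def)
  next
    case False
    have "I = (\<integral>b. \<bar>qb n b y - qb n b x\<bar> powr p \<partial>(uniform_measure lborel {A..B}))"
      by (simp add: I_def abs_minus_commute)
    then show ?thesis using half[OF assms(5,4) k _ assms(2,1)] False by simp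
  qed
  moreover have "1 / (8 * real n * (B - A) * 4 powr p) * \<bar>x k - y k\<bar> powr (p + 1) \<le> (\<bar>x k - y k\<bar>/4) powr p * (\<bar>x k - y k\<bar>/4) / (B - A)"
    by (rule arith_fin) (use assms in auto)
  ultimately show ?thesis using L by (simp add: I_def)
qed

end
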